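(* Let $\mathbb{B}$ be a separable Banach space with dual $\mathbb{B}^*$, $S_1^*(0)$ the unit sphere of $\mathbb{B}^*$, and $\mathcal K_{\mathbb B}$ the space of nonempty compact subsets of $\mathbb{B}$ with the Hausdorff distance. Let $(B_n)_{n\ge0}$ be a sequence of random convex elements of $\mathcal K_{\mathbb B}$ which is almost surely relatively compact in $\mathcal K_{\mathbb B}$. Suppose there is a deterministic function $\varphi:S_1^*(0)\to\mathbb{R}$ such that for every $\theta\in S_1^*(0)$, $\mathcal M_{B_n}(\theta)\to\varphi(\theta)$ almost surely as $n\to\infty$. Then $\varphi$ is the support function of some set $A\in\mathcal K_{\mathbb B}$ and $B_n\to A$ almost surely in $\mathcal K_{\mathbb B}$.
   Context: For $A\in\mathcal K_{\mathbb B}$, the support function is $\mathcal M_A(\theta)=\sup_{x\in A}\langle x,\theta\rangle$, $\theta\in S_1^*(0)$. Hausdorff distance: $\rho_{\mathbb B}(A,B)=\max\{\inf\{\epsilon:A\subset B^\epsilon\},\inf\{\epsilon:B\subset A^\epsilon\}\}$, $A^\epsilon$ the open $\epsilon$-neighbourhood. *)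

theory Defs
  imports "HOL-Analysis.Analysis" "HOL-Probability.Probability"
begin

definition KB :: "'a::metric_space set set" where
  "KB = {K. compact K \<and> K \<noteq> {}}"

definition nbhd :: "'a::metric_space set \<Rightarrow> real \<Rightarrow> 'a set" where
  "nbhd A \<epsilon> = {x. \<exists>y\<in>A. dist x y < \<epsilon>}"

definition hausdorff_distance :: "'a::metric_space set \<Rightarrow> 'a set \<Rightarrow> real" where
  "hausdorff_distance A B =
     max (Inf {\<epsilon>. \<epsilon> > 0 \<and> A \<subseteq> nbhd B \<epsilon>}) (Inf {\<epsilon>. \<epsilon> > 0 \<and> B \<subseteq> nbhd A \<epsilon>})"

text \<open>Borel sigma-algebra of K_B with the Hausdorff metric; since K_B is a
  separable metric space (B separable), it is generated by the open Hausdorff balls.\<close>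
definition KB_borel :: "'a::metric_space set measure" where
  "KB_borel = sigma KB
     {{K \<in> KB. hausdorff_distance K C < r} | C r. C \<in> KB}"

definition support_fun :: "'a::real_normed_vector set \<Rightarrow> ('a \<Rightarrow>\<^sub>L real) \<Rightarrow> real" where
  "support_fun A \<theta> = (SUP x\<in>A. blinfun_apply \<theta> x)"

definition rel_compact_KB :: "'a::metric_space set set \<Rightarrow> bool" where
  "rel_compact_KB S \<longleftrightarrow> S \<subseteq> KB \<and>
     (\<forall>s::nat \<Rightarrow> 'a set. (\<forall>n. s n \<in> S) \<longrightarrow>
        (\<exists>r K. strict_mono r \<and> K \<in> KB \<and>
              (\<lambda>k. hausdorff_distance (s (r k)) K) \<longlonglongrightarrow> 0))"

end

theory Submission
  imports Defs
begin


lemma hahn_banach_sublinear: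
  fixes p :: "'a::real_vector \<Rightarrow> real"
  assumes sub: "\<And>x y. p (x + y) \<le> p x + p y"
      and hom: "\<And>c x. c > 0 \<Longrightarrow> p (c *\<^sub>R x) \<le> c * p x"
  shows "\<exists>g. linear g \<and> (\<forall>x. g x \<le> p x)"
proof -
  have p0: "p 0 = 0"
  proof -
    have "p 0 \<le> (1/2) * p 0" using hom[of "1/2" 0] by simp
    moreover have "p 0 \<le> 2 * p 0" using hom[of 2 0] by simp
    ultimately show ?thesis by linarith
  qed
  have homeq: "p (c *\<^sub>R x) = c * p x" if "c > 0" for c x
  proof -
    have "p x = p ((1/c) *\<^sub>R (c *\<^sub>R x))" using that by simp
    also have "\<dots> \<le> (1/c) * p (c *\<^sub>R x)" using hom[of "1/c" "c *\<^sub>R x"] that by simp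
    finally have "c * p x \<le> p (c *\<^sub>R x)" using that by (simp add: field_simps)
    with hom[OF that, of x] show ?thesis by linarith
  qed
  define good where "good G \<longleftrightarrow> (0,0) \<in> G \<and> (\<forall>x a. (x,a)\<in>G \<longrightarrow> a \<le> p x) \<and>
      (\<forall>x a y b c. (x,a)\<in>G \<longrightarrow> (y,b)\<in>G \<longrightarrow> (c *\<^sub>R x + y, c*a + b) \<in> G)" for G :: "('a \<times> real) set"
  have goodD: "(0,0) \<in> G" "\<And>x a. (x,a)\<in>G \<Longrightarrow> a \<le> p x"
     "\<And>x a y b c. (x,a)\<in>G \<Longrightarrow> (y,b)\<in>G \<Longrightarrow> (c *\<^sub>R x + y, c*a + b) \<in> G"
    if "good G" for G using that unfolding good_def by auto
  have func: "a = b" if "good G" "(x,a)\<in>G" "(x,b)\<in>G" for G x a b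
  proof -
    have "((-1) *\<^sub>R x + x, (-1)*a + b) \<in> G" using goodD(3)[OF that(1,2,3)] .
    hence "b - a \<le> 0" using goodD(2)[OF that(1)] p0 by fastforce
    moreover have "((-1) *\<^sub>R x + x, (-1)*b + a) \<in> G" using goodD(3)[OF that(1,3,2)] .
    hence "a - b \<le> 0" using goodD(2)[OF that(1)] p0 by fastforce
    ultimately show ?thesis by linarith
  qed
  have "\<forall>C\<in>chains (Collect good). \<exists>U\<in>Collect good. \<forall>X\<in>C. X \<subseteq> U"
  proof
    fix C assume C: "C \<in> chains (Collect good)"
    show "\<exists>U\<in>Collect good. \<forall>X\<in>C. X \<subseteq> U"
    proof (cases "C = {}")
      case True
      have "good {(0,0)}" unfolding good_def using p0 by auto
      thus ?thesis using True by auto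
    next
      case False
      have CC: "C \<subseteq> Collect good" "\<And>X Y. X \<in> C \<Longrightarrow> Y \<in> C \<Longrightarrow> X \<subseteq> Y \<or> Y \<subseteq> X"
        using C unfolding chains_def chain_subset_def by auto
      have "good (\<Union>C)"
        unfolding good_def
      proof (intro conjI allI impI)
        from False obtain X where "X \<in> C" by auto
        thus "(0,0) \<in> \<Union>C" using CC goodD(1) by blast
      next
        fix x a assume "(x,a) \<in> \<Union>C"
        then obtain X where "X\<in>C" "(x,a) \<in> X" by auto
        thus "a \<le> p x" using CC goodD(2) by blast
      next
        fix x a y b c assume "(x,a) \<in> \<Union>C" "(y,b) \<in> \<Union>C"
        then obtain X Y where XY: "X\<in>C" "(x,a) \<in> X" "Y\<in>C" "(y,b)\<in>Y" by auto
        have zw: "(x,a) = (x,a)" "(y,b) = (y,b)" by auto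
        show "(c *\<^sub>R x + y, c * a + b) \<in> \<Union> C"
        proof (cases "X \<subseteq> Y")
          case True
          hence "(c *\<^sub>R x + y, c * a + b) \<in> Y" using goodD(3)[of Y x a y b c] XY zw CC(1) by auto
          thus ?thesis using zw XY by auto
        next
          case False
          hence "Y \<subseteq> X" using CC(2) XY by blast
          hence "(c *\<^sub>R x + y, c * a + b) \<in> X" using goodD(3)[of X x a y b c] XY zw CC(1) by auto
          thus ?thesis using zw XY by auto
        qed
      qed
      thus ?thesis by auto
    qed
  qed
  from Zorn_Lemma2[OF this] obtain M where M: "good M" "\<And>X. good X \<Longrightarrow> M \<subseteq> X \<Longrightarrow> X = M"
    by auto
  have total: "\<exists>a. (x0,a) \<in> M" for x0
  proof (rule ccontr)
    assume nx: "\<nexists>a. (x0, a) \<in> M"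
    define S where "S = {a - p (y - x0) | y a. (y,a) \<in> M}"
    define v where "v = Sup S"
    have bnd: "a - p (y - x0) \<le> p (z + x0) - b" if "(y,a)\<in>M" "(z,b)\<in>M" for y a z b
    proof -
      have "(1 *\<^sub>R y + z, 1*a + b) \<in> M" using goodD(3)[OF M(1) that] .
      hence "a + b \<le> p (y + z)" using goodD(2)[OF M(1)] by fastforce
      also have "\<dots> = p ((y - x0) + (z + x0))" by (simp add: algebra_simps)
      also have "\<dots> \<le> p (y - x0) + p (z + x0)" by (rule sub)
      finally show ?thesis by linarith
    qed
    have Sne: "S \<noteq> {}" using goodD(1)[OF M(1)] unfolding S_def by blast
    have Sbdd: "bdd_above S" unfolding S_def bdd_above_def
      using bnd goodD(1)[OF M(1)] by fastforce
    have v1: "a - p (y - x0) \<le> v" if "(y,a)\<in>M" for y a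
      unfolding v_def by (rule cSup_upper[OF _ Sbdd]) (use that S_def in auto)
    have v2: "v \<le> p (z + x0) - b" if "(z,b)\<in>M" for z b
      unfolding v_def by (rule cSup_least[OF Sne]) (use that S_def bnd in auto)
    define M' where "M' = {(y + t *\<^sub>R x0, a + t * v) | y a t. (y,a) \<in> M}"
    have sc: "((1/t) *\<^sub>R y, (1/t) * a) \<in> M" if "(y,a)\<in>M" for y a t
      using goodD(3)[OF M(1) that goodD(1)[OF M(1)], of "1/t"] by simp
    have "good M'"
      unfolding good_def
    proof (intro conjI allI impI)
      show "(0,0) \<in> M'" unfolding M'_def using goodD(1)[OF M(1)] by force
    next
      fix z za assume "(z,za) \<in> M'"
      then obtain y a t where z: "(z,za) = (y + t *\<^sub>R x0, a + t * v)" "(y,a)\<in>M" unfolding M'_def by auto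
      have "a + t * v \<le> p (y + t *\<^sub>R x0)"
      proof (cases "t = 0")
        case True thus ?thesis using goodD(2)[OF M(1) z(2)] by simp
      next
        case False
        show ?thesis
        proof (cases "t > 0")
          case True
          have "v \<le> p ((1/t) *\<^sub>R y + x0) - (1/t) * a" using v2[OF sc[OF z(2)]] .
          hence "t * v \<le> t * p ((1/t) *\<^sub>R y + x0) - a" using True
            by (simp add: field_simps)
          also have "t * p ((1/t) *\<^sub>R y + x0) = p (t *\<^sub>R ((1/t) *\<^sub>R y + x0))"
            using homeq True by simp
          also have "t *\<^sub>R ((1/t) *\<^sub>R y + x0) = y + t *\<^sub>R x0" using True
            by (simp add: algebra_simps)
          finally show ?thesis by linarith
        next
          case False2: False
          define s where "s = - t"
          have s: "s > 0" using False False2 s_def by auto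
          have "(1/s) * a - p ((1/s) *\<^sub>R y - x0) \<le> v" using v1[OF sc[OF z(2)]] .
          hence "a - s * p ((1/s) *\<^sub>R y - x0) \<le> s * v" using s
            by (simp add: field_simps)
          also have "s * p ((1/s) *\<^sub>R y - x0) = p (s *\<^sub>R ((1/s) *\<^sub>R y - x0))"
            using homeq s by simp
          also have "s *\<^sub>R ((1/s) *\<^sub>R y - x0) = y + t *\<^sub>R x0" using s s_def
            by (simp add: algebra_simps)
          finally show ?thesis using s_def by simp
        qed
      qed
      thus "za \<le> p z" using z by simp
    next
      fix z za w wa c assume "(z,za) \<in> M'" "(w,wa) \<in> M'"
      then obtain y a t y' a' t' where z: "(z,za) = (y + t *\<^sub>R x0, a + t * v)" "(y,a)\<in>M"
        and w: "(w,wa) = (y' + t' *\<^sub>R x0, a' + t' * v)" "(y',a')\<in>M" unfolding M'_def by blast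
      have m: "(c *\<^sub>R y + y', c * a + a') \<in> M" using goodD(3)[OF M(1) z(2) w(2)] .
      have e1: "c *\<^sub>R z + w = (c *\<^sub>R y + y') + (c*t + t') *\<^sub>R x0"
        using z(1) w(1) by (simp add: algebra_simps)
      have e2: "c * za + wa = (c * a + a') + (c*t+t') * v"
        using z(1) w(1) by (simp add: algebra_simps)
      have "((c *\<^sub>R y + y') + (c*t + t') *\<^sub>R x0, (c * a + a') + (c*t+t') * v) \<in> M'"
        unfolding M'_def using m by blast
      thus "(c *\<^sub>R z + w, c * za + wa) \<in> M'" using e1 e2 by simp
    qed
    moreover have "M \<subseteq> M'"
    proof
      fix z assume "z \<in> M"
      then obtain y a where "z = (y,a)" "(y,a) \<in> M" by (cases z) auto
      moreover have "(y + 0 *\<^sub>R x0, a + 0 * v) \<in> M'" unfolding M'_def using \<open>(y,a)\<in>M\<close> by blast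
      ultimately show "z \<in> M'" by simp
    qed
    ultimately have "M' = M" using M(2) by blast
    moreover have "(0 + 1 *\<^sub>R x0, 0 + 1 * v) \<in> M'" unfolding M'_def using goodD(1)[OF M(1)]
      by blast
    hence "(x0, v) \<in> M'" by simp
    ultimately show False using nx by auto
  qed
  define g where "g x = (THE a. (x,a) \<in> M)" for x
  have gM: "(x, g x) \<in> M" for x
  proof -
    obtain a where a: "(x,a)\<in>M" using total by auto
    have "(THE a. (x,a) \<in> M) = a" by (rule the_equality) (use a func[OF M(1)] in auto)
    thus ?thesis using a g_def by simp
  qed
  have geq: "g x = a" if "(x,a)\<in>M" for x a using func[OF M(1) gM that] .
  have "linear g"
  proof (rule linearI)
    fix x y show "g (x + y) = g x + g y"
      using geq[OF goodD(3)[OF M(1) gM gM, of 1 x y]] by simp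
  next
    fix c x show "g (c *\<^sub>R x) = c *\<^sub>R g x"
      using geq[OF goodD(3)[OF M(1) gM goodD(1)[OF M(1)], of c x]] by simp
  qed
  moreover have "g x \<le> p x" for x using goodD(2)[OF M(1) gM] .
  ultimately show ?thesis by blast
qed



lemma separation_margin:
  fixes C :: "'a::real_normed_vector set"
  assumes cvx: "convex C" and ne: "C \<noteq> {}" and pos: "0 < infdist q C"
  shows "\<exists>\<theta>::'a \<Rightarrow>\<^sub>L real. norm \<theta> = 1 \<and> (\<forall>c\<in>C. blinfun_apply \<theta> c \<le> blinfun_apply \<theta> q - infdist q C)"
proof -
  define \<delta> where "\<delta> = infdist q C"
  have dq: "\<delta> \<le> norm (q - c)" if "c \<in> C" for c
    using infdist_le[OF that, of q] unfolding \<delta>_def by (simp add: dist_norm)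
  define S where "S x = {norm (x + t *\<^sub>R (q - c)) - t * \<delta> | t c. t \<ge> 0 \<and> c \<in> C}" for x
  define p where "p x = Inf (S x)" for x
  from ne obtain c0 where c0: "c0 \<in> C" by auto
  have Sne: "S x \<noteq> {}" for x unfolding S_def using c0 by blast
  have Sbdd: "bdd_below (S x)" for x
  proof -
    have "- norm x \<le> norm (x + t *\<^sub>R (q - c)) - t * \<delta>" if "t \<ge> 0" "c \<in> C" for t c
    proof -
      have "t * \<delta> \<le> t * norm (q - c)" using dq[OF that(2)] that(1) by (simp add: mult_left_mono)
      also have "\<dots> = norm (t *\<^sub>R (q - c))" using that(1) by simp
      also have "\<dots> \<le> norm (x + t *\<^sub>R (q - c)) + norm x"
        using norm_triangle_ineq2[of "t *\<^sub>R (q - c)" "-x"] by (simp add: algebra_simps)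
      finally show ?thesis by linarith
    qed
    thus ?thesis unfolding S_def bdd_below_def by blast
  qed
  have pl: "p x \<le> norm (x + t *\<^sub>R (q - c)) - t * \<delta>" if "t \<ge> 0" "c \<in> C" for x t c
  proof -
    have "norm (x + t *\<^sub>R (q - c)) - t * \<delta> \<in> S x" unfolding S_def using that by blast
    thus ?thesis unfolding p_def by (rule cInf_lower[OF _ Sbdd])
  qed
  have pg: "z \<le> p x" if "\<And>t c. t \<ge> 0 \<Longrightarrow> c \<in> C \<Longrightarrow> z \<le> norm (x + t *\<^sub>R (q - c)) - t * \<delta>" for x z
    unfolding p_def
  proof (rule cInf_greatest[OF Sne])
    fix w assume "w \<in> S x"
    then obtain t c where "w = norm (x + t *\<^sub>R (q - c)) - t * \<delta>" "t \<ge> 0" "c \<in> C"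
      unfolding S_def by blast
    thus "z \<le> w" using that by simp
  qed
  have pn: "p x \<le> norm x" for x using pl[of 0 c0 x] c0 by simp
  have key: "p (x + y) \<le> (norm (x + t *\<^sub>R (q - c)) - t * \<delta>) + (norm (y + s *\<^sub>R (q - c')) - s * \<delta>)"
    if "t \<ge> 0" "c \<in> C" "s \<ge> 0" "c' \<in> C" for x y t c s c'
  proof (cases "t + s = 0")
    case True
    hence "t = 0" "s = 0" using that by auto
    thus ?thesis using pn[of "x+y"] norm_triangle_ineq[of x y] by simp
  next
    case False
    hence ts: "t + s > 0" using that by auto
    define c'' where "c'' = (t/(t+s)) *\<^sub>R c + (s/(t+s)) *\<^sub>R c'"
    have u: "t/(t+s) \<ge> 0" "s/(t+s) \<ge> 0" "t/(t+s) + s/(t+s) = 1"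
      using ts that by (auto simp: add_divide_distrib[symmetric])
    have "c'' \<in> C" unfolding c''_def using convexD[OF cvx that(2) that(4) u] .
    have eq: "(t+s) *\<^sub>R (q - c'') = t *\<^sub>R (q - c) + s *\<^sub>R (q - c')"
    proof -
      have "(t+s) *\<^sub>R c'' = t *\<^sub>R c + s *\<^sub>R c'" unfolding c''_def using ts
        by (simp add: scaleR_add_right)
      thus ?thesis by (simp add: algebra_simps)
    qed
    have "p (x + y) \<le> norm ((x + y) + (t+s) *\<^sub>R (q - c'')) - (t+s) * \<delta>"
      using pl[OF _ \<open>c'' \<in> C\<close>] ts by simp
    also have "(x + y) + (t+s) *\<^sub>R (q - c'') = (x + t *\<^sub>R (q - c)) + (y + s *\<^sub>R (q - c'))"
      using eq by (simp add: algebra_simps)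
    finally show ?thesis using norm_triangle_ineq[of "x + t *\<^sub>R (q - c)" "y + s *\<^sub>R (q - c')"]
      by (simp add: algebra_simps)
  qed
  have sub: "p (x + y) \<le> p x + p y" for x y
  proof -
    have "p (x + y) - p x \<le> norm (y + s *\<^sub>R (q - c')) - s * \<delta>" if sc: "s \<ge> 0" "c' \<in> C" for s c'
    proof -
      have "p (x + y) - (norm (y + s *\<^sub>R (q - c')) - s * \<delta>) \<le> p x"
      proof (rule pg)
        fix t :: real and c assume tc: "t \<ge> 0" "c \<in> C"
        from key[OF tc sc, of x y] show "p (x + y) - (norm (y + s *\<^sub>R (q - c')) - s * \<delta>)
              \<le> norm (x + t *\<^sub>R (q - c)) - t * \<delta>" by linarith
      qed
      thus ?thesis by linarith
    qed
    hence "p (x + y) - p x \<le> p y" by (rule pg)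
    thus ?thesis by linarith
  qed
  have hom: "p (a *\<^sub>R x) \<le> a * p x" if "a > 0" for a x
  proof -
    have "p (a *\<^sub>R x) / a \<le> p x"
    proof (rule pg)
      fix t :: real and c assume "t \<ge> 0" "c \<in> C"
      have "p (a *\<^sub>R x) \<le> norm (a *\<^sub>R x + (a*t) *\<^sub>R (q - c)) - (a*t) * \<delta>"
        using pl[OF _ \<open>c\<in>C\<close>] \<open>t\<ge>0\<close> that by simp
      also have "a *\<^sub>R x + (a*t) *\<^sub>R (q - c) = a *\<^sub>R (x + t *\<^sub>R (q - c))" by (simp add: algebra_simps)
      also have "norm \<dots> = a * norm (x + t *\<^sub>R (q - c))" using that by simp
      finally show "p (a *\<^sub>R x) / a \<le> norm (x + t *\<^sub>R (q - c)) - t * \<delta>"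
        using that by (simp add: field_simps)
    qed
    thus ?thesis using that by (simp add: field_simps)
  qed
  obtain g where g: "linear g" "\<And>x. g x \<le> p x" using hahn_banach_sublinear[of p, OF sub hom] by blast
  have gadd: "g (x + y) = g x + g y" "g (a *\<^sub>R x) = a * g x" for x y a
    using g(1) by (auto simp: linear_add linear_scale)
  have gneg: "g (- x) = - g x" for x using gadd(2)[of "-1" x] by simp
  have gb: "\<bar>g x\<bar> \<le> norm x" for x
    using g(2)[of x] g(2)[of "-x"] pn[of x] pn[of "-x"] gneg[of x] by auto
  have bl: "bounded_linear g"
    by (rule bounded_linear_intro[where K=1]) (use gadd gb in auto)
  define \<theta>0 where "\<theta>0 = Blinfun g"
  have th0: "blinfun_apply \<theta>0 = g" unfolding \<theta>0_def using bounded_linear_Blinfun_apply[OF bl] .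
  have gsep: "g c \<le> g q - \<delta>" if "c \<in> C" for c
  proof -
    have "p (- (q - c)) \<le> norm (- (q - c) + 1 *\<^sub>R (q - c)) - 1 * \<delta>" using pl[of 1 c "- (q - c)"] that by simp
    hence "p (- (q - c)) \<le> - \<delta>" by simp
    hence "g (- (q - c)) \<le> - \<delta>" using g(2)[of "- (q - c)"] by simp
    moreover have "g (- (q - c)) = g c - g q" using gadd gneg
      by (metis add_uminus_conv_diff linear_diff g(1) minus_diff_eq)
    ultimately show ?thesis by linarith
  qed
  have n0le: "norm \<theta>0 \<le> 1" by (rule norm_blinfun_bound) (use gb th0 in auto)
  have dpos: "\<delta> > 0" using pos \<delta>_def by simp
  have "\<delta> \<le> g q - g c0" using gsep[OF c0] by simp
  also have "\<dots> = \<theta>0 (q - c0)" using th0 linear_diff[OF g(1)] by simp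
  also have "\<dots> \<le> norm \<theta>0 * norm (q - c0)" using norm_blinfun[of \<theta>0 "q - c0"] by simp
  finally have n0pos: "norm \<theta>0 > 0" using dpos
    by (metis mult_eq_0_iff norm_ge_zero order.not_eq_order_implies_strict not_le)
  define \<theta> where "\<theta> = (1 / norm \<theta>0) *\<^sub>R \<theta>0"
  have "norm \<theta> = 1" unfolding \<theta>_def using n0pos by simp
  moreover have "\<theta> c \<le> \<theta> q - \<delta>" if "c \<in> C" for c
  proof -
    have "\<theta> q - \<theta> c = (g q - g c) / norm \<theta>0" unfolding \<theta>_def using th0 by (simp add: diff_divide_distrib blinfun.scaleR_left)
    also have "\<dots> \<ge> \<delta> / norm \<theta>0" using gsep[OF that] n0pos by (simp add: divide_right_mono)
    finally have "\<delta> / norm \<theta>0 \<le> \<theta> q - \<theta> c" .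
    moreover have "\<delta> \<le> \<delta> / norm \<theta>0" using n0le n0pos dpos by (simp add: le_divide_eq)
    ultimately show ?thesis by linarith
  qed
  ultimately show ?thesis unfolding \<delta>_def by blast
qed



lemma inf_nbhd_ne:
  fixes A B :: "'a::metric_space set"
  assumes "compact A" "B \<noteq> {}"
  shows "{\<epsilon>. \<epsilon> > 0 \<and> A \<subseteq> nbhd B \<epsilon>} \<noteq> {}"
proof -
  obtain b0 where b0: "b0 \<in> B" using assms(2) by auto
  obtain r where r: "r > 0" "A \<subseteq> ball b0 r"
    using bounded_subset_ballD[OF compact_imp_bounded[OF assms(1)]] by blast
  have "A \<subseteq> nbhd B r" unfolding nbhd_def
  proof
    fix x assume "x \<in> A"
    hence "dist b0 x < r" using r by auto
    thus "x \<in> {x. \<exists>y\<in>B. dist x y < r}" using b0 by (auto simp: dist_commute)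
  qed
  thus ?thesis using r by blast
qed

lemma inf_nbhd_lt:
  fixes A B :: "'a::metric_space set"
  assumes "compact A" "B \<noteq> {}" "Inf {\<epsilon>. \<epsilon> > 0 \<and> A \<subseteq> nbhd B \<epsilon>} < e"
  shows "\<forall>a\<in>A. \<exists>b\<in>B. dist a b < e"
proof -
  obtain \<epsilon> where "\<epsilon> \<in> {\<epsilon>. \<epsilon> > 0 \<and> A \<subseteq> nbhd B \<epsilon>}" "\<epsilon> < e"
    using cInf_lessD[OF inf_nbhd_ne[OF assms(1,2)] assms(3)] by blast
  hence e: "A \<subseteq> nbhd B \<epsilon>" "\<epsilon> < e" by auto
  show ?thesis
  proof
    fix a assume "a \<in> A"
    then obtain b where "b \<in> B" "dist a b < \<epsilon>" using e(1) unfolding nbhd_def by blast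
    thus "\<exists>b\<in>B. dist a b < e" using e(2) by (meson less_trans)
  qed
qed

lemma haus_lt:
  fixes A B :: "'a::metric_space set"
  assumes "A \<in> KB" "B \<in> KB" "hausdorff_distance A B < e"
  shows "\<forall>a\<in>A. \<exists>b\<in>B. dist a b < e" "\<forall>b\<in>B. \<exists>a\<in>A. dist a b < e"
proof -
  have c: "compact A" "A \<noteq> {}" "compact B" "B \<noteq> {}" using assms(1,2) unfolding KB_def by auto
  have "Inf {\<epsilon>. \<epsilon> > 0 \<and> A \<subseteq> nbhd B \<epsilon>} < e" "Inf {\<epsilon>. \<epsilon> > 0 \<and> B \<subseteq> nbhd A \<epsilon>} < e"
    using assms(3) unfolding hausdorff_distance_def by auto
  from inf_nbhd_lt[OF c(1,4) this(1)] inf_nbhd_lt[OF c(3,2) this(2)]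
  show "\<forall>a\<in>A. \<exists>b\<in>B. dist a b < e" "\<forall>b\<in>B. \<exists>a\<in>A. dist a b < e"
    by (auto simp: dist_commute)
qed

lemma haus_nonneg:
  fixes A B :: "'a::metric_space set"
  assumes "A \<in> KB" "B \<in> KB"
  shows "hausdorff_distance A B \<ge> 0"
proof -
  have c: "compact A" "A \<noteq> {}" "compact B" "B \<noteq> {}" using assms(1,2) unfolding KB_def by auto
  have "0 \<le> Inf {\<epsilon>. \<epsilon> > 0 \<and> A \<subseteq> nbhd B \<epsilon>}"
    by (rule cInf_greatest[OF inf_nbhd_ne[OF c(1,4)]]) auto
  thus ?thesis unfolding hausdorff_distance_def by simp
qed

lemma blinfun_abs_le:
  fixes \<theta> :: "'a::real_normed_vector \<Rightarrow>\<^sub>L real"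
  assumes "norm \<theta> = 1"
  shows "\<bar>blinfun_apply \<theta> v\<bar> \<le> norm v"
  using norm_blinfun[of \<theta> v] assms by simp

lemma sf_bdd:
  fixes A :: "'a::real_normed_vector set" and \<theta> :: "'a \<Rightarrow>\<^sub>L real"
  assumes "compact A"
  shows "bdd_above (blinfun_apply \<theta> ` A)"
proof -
  obtain R where R: "\<forall>a\<in>A. norm a \<le> R" using compact_imp_bounded[OF assms] bounded_iff by blast
  have "blinfun_apply \<theta> a \<le> norm \<theta> * R" if "a \<in> A" for a
  proof -
    have "blinfun_apply \<theta> a \<le> norm \<theta> * norm a" using norm_blinfun[of \<theta> a] by simp
    also have "\<dots> \<le> norm \<theta> * R" using R that by (simp add: mult_left_mono)
    finally show ?thesis .
  qed
  thus ?thesis unfolding bdd_above_def by blast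
qed

lemma sf_upper:
  fixes A :: "'a::real_normed_vector set" and \<theta> :: "'a \<Rightarrow>\<^sub>L real"
  assumes "compact A" "a \<in> A"
  shows "blinfun_apply \<theta> a \<le> support_fun A \<theta>"
  unfolding support_fun_def by (rule cSUP_upper[OF assms(2) sf_bdd[OF assms(1)]])

lemma sf_least:
  fixes A :: "'a::real_normed_vector set" and \<theta> :: "'a \<Rightarrow>\<^sub>L real"
  assumes "A \<noteq> {}" "\<And>a. a \<in> A \<Longrightarrow> blinfun_apply \<theta> a \<le> z"
  shows "support_fun A \<theta> \<le> z"
  unfolding support_fun_def by (rule cSUP_least[OF assms])

lemma sf_haus_le:
  fixes A B :: "'a::real_normed_vector set"
  assumes "A \<in> KB" "B \<in> KB" "norm \<theta> = 1"
  shows "support_fun A \<theta> \<le> support_fun B \<theta> + hausdorff_distance A B"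
proof (rule field_le_epsilon)
  fix d :: real assume d: "d > 0"
  have c: "compact A" "A \<noteq> {}" "compact B" "B \<noteq> {}" using assms(1,2) unfolding KB_def by auto
  have "\<forall>a\<in>A. \<exists>b\<in>B. dist a b < hausdorff_distance A B + d"
    using haus_lt(1)[OF assms(1,2)] d by simp
  show "support_fun A \<theta> \<le> support_fun B \<theta> + hausdorff_distance A B + d"
  proof (rule sf_least[OF c(2)])
    fix a assume "a \<in> A"
    then obtain b where b: "b \<in> B" "dist a b < hausdorff_distance A B + d"
      using \<open>\<forall>a\<in>A. _\<close> by blast
    have "blinfun_apply \<theta> a = blinfun_apply \<theta> b + blinfun_apply \<theta> (a - b)"
      by (simp add: blinfun.diff_right)
    also have "blinfun_apply \<theta> (a - b) \<le> norm (a - b)"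
      using blinfun_abs_le[OF assms(3), of "a - b"] by simp
    also have "blinfun_apply \<theta> b \<le> support_fun B \<theta>" using sf_upper[OF c(3) b(1)] .
    finally show "blinfun_apply \<theta> a \<le> support_fun B \<theta> + hausdorff_distance A B + d"
      using b(2) by (simp add: dist_norm)
  qed
qed

lemma haus_sym: "hausdorff_distance A B = hausdorff_distance B A"
  unfolding hausdorff_distance_def by simp

lemma sf_tendsto:
  fixes A :: "'a::real_normed_vector set"
  assumes "A \<in> KB" "\<And>n. S n \<in> KB" "norm \<theta> = 1" "(\<lambda>n. hausdorff_distance (S n) A) \<longlonglongrightarrow> 0"
  shows "(\<lambda>n. support_fun (S n) \<theta>) \<longlonglongrightarrow> support_fun A \<theta>"
proof -
  have "(\<lambda>n. support_fun (S n) \<theta> - support_fun A \<theta>) \<longlonglongrightarrow> 0"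
  proof (rule Lim_null_comparison[OF _ assms(4)])
    show "\<forall>\<^sub>F n in sequentially. norm (support_fun (S n) \<theta> - support_fun A \<theta>) \<le> hausdorff_distance (S n) A"
    proof (intro always_eventually allI)
      fix n
      have "support_fun (S n) \<theta> \<le> support_fun A \<theta> + hausdorff_distance (S n) A"
        "support_fun A \<theta> \<le> support_fun (S n) \<theta> + hausdorff_distance (S n) A"
        using sf_haus_le[OF assms(2) assms(1) assms(3), of n] sf_haus_le[OF assms(1) assms(2) assms(3), of n]
        by (auto simp: haus_sym)
      thus "norm (support_fun (S n) \<theta> - support_fun A \<theta>) \<le> hausdorff_distance (S n) A"
        by (simp add: abs_le_iff)
    qed
  qed
  thus ?thesis by (simp add: LIM_zero_iff)
qed

lemma convex_limit:
  fixes K :: "'a::real_normed_vector set"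
  assumes K: "K \<in> KB" and S: "\<And>k. S k \<in> KB" "\<And>k. convex (S k)"
    and lim: "(\<lambda>k. hausdorff_distance (S k) K) \<longlonglongrightarrow> 0"
  shows "convex K"
  unfolding convex_def
proof (intro ballI allI impI)
  fix x y and u v :: real assume xy: "x \<in> K" "y \<in> K" and uv: "0 \<le> u" "0 \<le> v" "u + v = 1"
  have cl: "closed K" using K unfolding KB_def by (auto intro: compact_imp_closed)
  show "u *\<^sub>R x + v *\<^sub>R y \<in> K"
  proof (subst closed_approachable[OF cl, symmetric], intro allI impI)
    fix e :: real assume e: "e > 0"
    have "\<exists>no. \<forall>n\<ge>no. norm (hausdorff_distance (S n) K - 0) < e/2"
      using lim[unfolded LIMSEQ_iff, rule_format, of "e/2"] e by simp
    then obtain N where N: "norm (hausdorff_distance (S N) K - 0) < e/2" by blast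
    hence h: "hausdorff_distance (S N) K < e/2" by simp
    obtain x' where x': "x' \<in> S N" "dist x' x < e/2" using haus_lt(2)[OF S(1) K h] xy by blast
    obtain y' where y': "y' \<in> S N" "dist y' y < e/2" using haus_lt(2)[OF S(1) K h] xy by blast
    have z': "u *\<^sub>R x' + v *\<^sub>R y' \<in> S N" using S(2)[of N] x'(1) y'(1) uv
      unfolding convex_def by blast
    obtain w where w: "w \<in> K" "dist (u *\<^sub>R x' + v *\<^sub>R y') w < e/2"
      using haus_lt(1)[OF S(1) K h] z' by blast
    have "dist (u *\<^sub>R x + v *\<^sub>R y) (u *\<^sub>R x' + v *\<^sub>R y') = norm (u *\<^sub>R (x - x') + v *\<^sub>R (y - y'))"
      by (simp add: dist_norm algebra_simps)
    also have "\<dots> \<le> u * norm (x - x') + v * norm (y - y')"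
      using norm_triangle_ineq[of "u *\<^sub>R (x - x')" "v *\<^sub>R (y - y')"] uv by simp
    also have "\<dots> \<le> u * (e/2) + v * (e/2)"
      using x'(2) y'(2) uv by (intro add_mono mult_left_mono) (auto simp: dist_norm norm_minus_commute)
    also have "\<dots> = (u+v)*(e/2)" by (simp add: distrib_right)
    also have "\<dots> = e/2" using uv by simp
    finally have "dist (u *\<^sub>R x + v *\<^sub>R y) w < e" using w(2) dist_triangle[of "u *\<^sub>R x + v *\<^sub>R y" w "u *\<^sub>R x' + v *\<^sub>R y'"]
      by linarith
    thus "\<exists>w\<in>K. dist w (u *\<^sub>R x + v *\<^sub>R y) < e" using w(1) by (auto simp: dist_commute)
  qed
qed



lemma net_exists:
  fixes K :: "'a::metric_space set" and xs :: "nat \<Rightarrow> 'a"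
  assumes K: "compact K" "K \<noteq> {}" and dense: "\<And>y e. e > 0 \<Longrightarrow> \<exists>n. dist y (xs n) < e"
    and eta: "\<eta> > 0"
  shows "\<exists>l. set l \<noteq> {} \<and> (\<forall>k\<in>K. \<exists>i\<in>set l. dist k (xs i) < \<eta>) \<and> (\<forall>i\<in>set l. \<exists>k\<in>K. dist k (xs i) < \<eta>)"
proof -
  have "\<eta>/2 > 0" using eta by simp
  then obtain F where F: "finite F" "K \<subseteq> (\<Union>x\<in>F. ball x (\<eta>/2))"
    using K(1) unfolding compact_eq_totally_bounded by blast
  define F' where "F' = {x\<in>F. ball x (\<eta>/2) \<inter> K \<noteq> {}}"
  have F'cov: "K \<subseteq> (\<Union>x\<in>F'. ball x (\<eta>/2))" using F(2) unfolding F'_def by blast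
  have "finite F'" using F(1) unfolding F'_def by simp
  define f where "f x = (SOME n. dist x (xs n) < \<eta>/2)" for x
  have f: "dist x (xs (f x)) < \<eta>/2" for x
  proof -
    have "\<exists>n. dist x (xs n) < \<eta>/2" using dense[of "\<eta>/2" x] eta by simp
    thus ?thesis unfolding f_def by (rule someI_ex)
  qed
  from finite_list[OF finite_imageI[OF \<open>finite F'\<close>]] obtain l where l: "set l = f ` F'" ..
  have "F' \<noteq> {}"
  proof
    assume "F' = {}"
    hence "K \<subseteq> {}" using F'cov by simp
    thus False using K(2) by simp
  qed
  hence "set l \<noteq> {}" using l by simp
  moreover have "\<forall>k\<in>K. \<exists>i\<in>set l. dist k (xs i) < \<eta>"
  proof
    fix k assume "k \<in> K"
    then obtain x where x: "x \<in> F'" "dist x k < \<eta>/2" using F'cov by auto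
    have "dist k (xs (f x)) \<le> dist k x + dist x (xs (f x))" by (rule dist_triangle)
    also have "\<dots> < \<eta>" using x(2) f[of x] by (simp add: dist_commute)
    finally show "\<exists>i\<in>set l. dist k (xs i) < \<eta>" using l x(1) by auto
  qed
  moreover have "\<forall>i\<in>set l. \<exists>k\<in>K. dist k (xs i) < \<eta>"
  proof
    fix i assume "i \<in> set l"
    then obtain x where x: "x \<in> F'" "i = f x" using l by auto
    then obtain k where k: "k \<in> K" "dist x k < \<eta>/2" unfolding F'_def by auto
    have "dist k (xs i) \<le> dist k x + dist x (xs i)" by (rule dist_triangle)
    also have "\<dots> < \<eta>" using k(2) f[of x] x(2) by (simp add: dist_commute)
    finally show "\<exists>k\<in>K. dist k (xs i) < \<eta>" using k(1) by auto
  qed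
  ultimately show ?thesis by blast
qed

lemma nbhd_convex:
  fixes K :: "'a::real_normed_vector set"
  assumes "convex K"
  shows "convex {y. \<exists>k\<in>K. dist y k < \<eta>}"
  unfolding convex_def
proof (intro ballI allI impI)
  fix x y and u v :: real
  assume "x \<in> {y. \<exists>k\<in>K. dist y k < \<eta>}" "y \<in> {y. \<exists>k\<in>K. dist y k < \<eta>}"
     and uv: "0 \<le> u" "0 \<le> v" "u + v = 1"
  then obtain a b where ab: "a \<in> K" "dist x a < \<eta>" "b \<in> K" "dist y b < \<eta>" by auto
  have "u *\<^sub>R a + v *\<^sub>R b \<in> K" using assms ab uv unfolding convex_def by blast
  moreover have "dist (u *\<^sub>R x + v *\<^sub>R y) (u *\<^sub>R a + v *\<^sub>R b) < \<eta>"
  proof -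
    have "dist (u *\<^sub>R x + v *\<^sub>R y) (u *\<^sub>R a + v *\<^sub>R b) = norm (u *\<^sub>R (x - a) + v *\<^sub>R (y - b))"
      by (simp add: dist_norm algebra_simps)
    also have "\<dots> \<le> u * norm (x - a) + v * norm (y - b)"
      using norm_triangle_ineq[of "u *\<^sub>R (x - a)" "v *\<^sub>R (y - b)"] uv by simp
    finally have le: "dist (u *\<^sub>R x + v *\<^sub>R y) (u *\<^sub>R a + v *\<^sub>R b) \<le> u * norm (x - a) + v * norm (y - b)" .
    show ?thesis
    proof (cases "u = 0")
      case True thus ?thesis using uv ab le by (simp add: dist_norm)
    next
      case False
      hence "u * norm (x - a) < u * \<eta>" using uv ab by (simp add: dist_norm)
      moreover have "v * norm (y - b) \<le> v * \<eta>" using uv ab by (intro mult_left_mono) (auto simp: dist_norm)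
      ultimately have "u * norm (x - a) + v * norm (y - b) < u * \<eta> + v * \<eta>" by (rule add_less_le_mono)
      also have "u * \<eta> + v * \<eta> = (u + v) * \<eta>" by (simp add: distrib_right)
      finally have "u * norm (x - a) + v * norm (y - b) < \<eta>" using uv by simp
      thus ?thesis using le by linarith
    qed
  qed
  ultimately show "u *\<^sub>R x + v *\<^sub>R y \<in> {y. \<exists>k\<in>K. dist y k < \<eta>}" by blast
qed

lemma ident:
  fixes xs :: "nat \<Rightarrow> 'a::real_normed_vector" and \<Theta> :: "nat list \<times> nat \<Rightarrow> ('a \<Rightarrow>\<^sub>L real)"
  assumes dense: "\<And>y e. e > 0 \<Longrightarrow> \<exists>n. dist y (xs n) < e"
    and Th: "\<And>l n. set l \<noteq> {} \<Longrightarrow> 0 < infdist (xs n) (convex hull (xs ` set l)) \<Longrightarrow>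
       norm (\<Theta> (l,n)) = 1 \<and> (\<forall>c\<in>convex hull (xs ` set l).
          blinfun_apply (\<Theta> (l,n)) c \<le> blinfun_apply (\<Theta> (l,n)) (xs n) - infdist (xs n) (convex hull (xs ` set l)))"
    and K: "K \<in> KB" "convex K" and K': "K' \<in> KB"
    and eq: "\<And>i. norm (\<Theta> i) = 1 \<Longrightarrow> support_fun K (\<Theta> i) = support_fun K' (\<Theta> i)"
  shows "K' \<subseteq> K"
proof
  fix x0 assume x0: "x0 \<in> K'"
  show "x0 \<in> K"
  proof (rule ccontr)
    assume nx: "x0 \<notin> K"
    have Kc: "compact K" "K \<noteq> {}" using K(1) unfolding KB_def by auto
    have K'c: "compact K'" "K' \<noteq> {}" using K'(1) unfolding KB_def by auto
    define \<eta> where "\<eta> = infdist x0 K / 4"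
    have d0: "0 < infdist x0 K" using infdist_pos_not_in_closed[OF compact_imp_closed[OF Kc(1)] Kc(2) nx] .
    hence eta: "\<eta> > 0" unfolding \<eta>_def by simp
    obtain l where l: "set l \<noteq> {}" "\<forall>k\<in>K. \<exists>i\<in>set l. dist k (xs i) < \<eta>"
        "\<forall>i\<in>set l. \<exists>k\<in>K. dist k (xs i) < \<eta>"
      using net_exists[OF Kc dense eta] by blast
    define C where "C = convex hull (xs ` set l)"
    have CN: "C \<subseteq> {y. \<exists>k\<in>K. dist y k < \<eta>}" unfolding C_def
    proof (rule hull_minimal)
      show "xs ` set l \<subseteq> {y. \<exists>k\<in>K. dist y k < \<eta>}" using l(3) by (auto simp: dist_commute)
      show "convex {y. \<exists>k\<in>K. dist y k < \<eta>}" by (rule nbhd_convex[OF K(2)])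
    qed
    have xsC: "xs i \<in> C" if "i \<in> set l" for i unfolding C_def by (rule hull_inc) (use that in simp)
    obtain i0 where "i0 \<in> set l" using l(1) by (metis ex_in_conv)
    hence Cne: "C \<noteq> {}" using xsC by auto
    obtain n where n: "dist x0 (xs n) < \<eta>" using dense[of \<eta> x0] eta by blast
    have far: "2 * \<eta> \<le> infdist (xs n) C"
    proof -
      have "2 * \<eta> \<le> dist (xs n) c" if cC: "c \<in> C" for c
      proof -
        obtain k where k: "k \<in> K" "dist c k < \<eta>" using CN cC by blast
        have "4 * \<eta> \<le> dist x0 k" using infdist_le[OF k(1), of x0] unfolding \<eta>_def by simp
        also have "dist x0 k \<le> dist x0 (xs n) + dist (xs n) c + dist c k"
          by (metis dist_triangle add_right_mono order_trans)
        finally show ?thesis using n k(2) by linarith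
      qed
      thus ?thesis unfolding infdist_def using Cne by (auto intro!: cInf_greatest)
    qed
    hence pos: "0 < infdist (xs n) C" using eta by linarith
    define \<theta> where "\<theta> = \<Theta> (l,n)"
    have th: "norm \<theta> = 1" "\<And>c. c \<in> C \<Longrightarrow> blinfun_apply \<theta> c \<le> blinfun_apply \<theta> (xs n) - infdist (xs n) C"
      using Th[OF l(1) pos[unfolded C_def]] unfolding \<theta>_def C_def by auto
    have "support_fun K \<theta> \<le> blinfun_apply \<theta> (xs n) - \<eta>"
    proof (rule sf_least[OF Kc(2)])
      fix k assume "k \<in> K"
      then obtain i where i: "i \<in> set l" "dist k (xs i) < \<eta>" using l(2) by blast
      have "blinfun_apply \<theta> k = blinfun_apply \<theta> (xs i) + blinfun_apply \<theta> (k - xs i)"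
        by (simp add: blinfun.diff_right)
      also have "blinfun_apply \<theta> (k - xs i) \<le> norm (k - xs i)"
        using blinfun_abs_le[OF th(1), of "k - xs i"] by simp
      also have "blinfun_apply \<theta> (xs i) \<le> blinfun_apply \<theta> (xs n) - infdist (xs n) C"
        using th(2)[OF xsC[OF i(1)]] .
      finally show "blinfun_apply \<theta> k \<le> blinfun_apply \<theta> (xs n) - \<eta>"
        using far i(2) by (simp add: dist_norm)
    qed
    moreover have "blinfun_apply \<theta> x0 > blinfun_apply \<theta> (xs n) - \<eta>"
    proof -
      have "blinfun_apply \<theta> x0 = blinfun_apply \<theta> (xs n) - blinfun_apply \<theta> (xs n - x0)"
        by (simp add: blinfun.diff_right)
      moreover have "blinfun_apply \<theta> (xs n - x0) \<le> norm (xs n - x0)"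
        using blinfun_abs_le[OF th(1), of "xs n - x0"] by simp
      ultimately show ?thesis using n by (simp add: dist_norm norm_minus_commute)
    qed
    moreover have "blinfun_apply \<theta> x0 \<le> support_fun K' \<theta>" by (rule sf_upper[OF K'c(1) x0])
    moreover have "support_fun K \<theta> = support_fun K' \<theta>" using eq[of "(l,n)"] th(1) unfolding \<theta>_def by simp
    ultimately show False by linarith
  qed
qed



lemma AE_ex:
  assumes "prob_space M" "AE x in M. P x"
  shows "\<exists>x. P x"
proof (rule ccontr)
  assume np: "\<nexists>x. P x"
  have "AE x in M. P x \<longrightarrow> False" using np by simp
  from AE_mp[OF assms(2) this] have "AE x in M. False" .
  thus False using prob_space.AE_False[OF assms(1)] by simp
qed

lemma relc_sub:
  fixes S :: "'a::metric_space set set" and s :: "nat \<Rightarrow> 'a set"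
  assumes "rel_compact_KB S" "\<forall>n. s n \<in> S"
  shows "\<exists>r K. strict_mono r \<and> K \<in> KB \<and> (\<lambda>k. hausdorff_distance (s (r k)) K) \<longlonglongrightarrow> 0"
  using assms(1)[unfolded rel_compact_KB_def, THEN conjunct2, THEN spec, THEN mp, OF assms(2)] .

theorem lemma13:
  fixes M :: "'w measure"
    and B :: "nat \<Rightarrow> 'w \<Rightarrow> 'a::{banach, second_countable_topology} set"
    and \<phi> :: "('a \<Rightarrow>\<^sub>L real) \<Rightarrow> real"
  assumes "prob_space M"
    and meas: "\<And>n. B n \<in> M \<rightarrow>\<^sub>M KB_borel"
    and inKB: "\<And>n \<omega>. \<omega> \<in> space M \<Longrightarrow> B n \<omega> \<in> KB"
    and cvx: "\<And>n \<omega>. \<omega> \<in> space M \<Longrightarrow> convex (B n \<omega>)"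
    and relc: "AE \<omega> in M. rel_compact_KB (range (\<lambda>n. B n \<omega>))"
    and conv: "\<And>\<theta>. norm \<theta> = 1 \<Longrightarrow>
                 (AE \<omega> in M. (\<lambda>n. support_fun (B n \<omega>) \<theta>) \<longlonglongrightarrow> \<phi> \<theta>)"
  shows "\<exists>A\<in>KB. (\<forall>\<theta>. norm \<theta> = 1 \<longrightarrow> support_fun A \<theta> = \<phi> \<theta>) \<and>
           (AE \<omega> in M. (\<lambda>n. hausdorff_distance (B n \<omega>) A) \<longlonglongrightarrow> 0)"
proof -
  obtain D :: "'a set" where D: "countable D" "\<forall>X. open X \<longrightarrow> X \<noteq> {} \<longrightarrow> (\<exists>d\<in>D. d \<in> X)"
    using countable_dense_exists by blast
  define xs where "xs = from_nat_into D"
  have dense: "\<exists>n. dist y (xs n) < e" if e: "e > 0" for y e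
  proof -
    have "ball y e \<noteq> {}" using e by simp
    then obtain d where d: "d \<in> D" "d \<in> ball y e" using D(2) by blast
    obtain n where "from_nat_into D n = d" using from_nat_into_surj[OF D(1) d(1)] by blast
    thus ?thesis using d(2) unfolding xs_def by auto
  qed
  define \<Theta> :: "nat list \<times> nat \<Rightarrow> ('a \<Rightarrow>\<^sub>L real)" where "\<Theta> i = (SOME \<theta>. norm \<theta> = 1 \<and>
      (\<forall>c\<in>convex hull (xs ` set (fst i)). blinfun_apply \<theta> c \<le> blinfun_apply \<theta> (xs (snd i))
          - infdist (xs (snd i)) (convex hull (xs ` set (fst i)))))" for i
  have Th: "norm (\<Theta> (l,n)) = 1 \<and> (\<forall>c\<in>convex hull (xs ` set l).
          blinfun_apply (\<Theta> (l,n)) c \<le> blinfun_apply (\<Theta> (l,n)) (xs n) - infdist (xs n) (convex hull (xs ` set l)))"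
    if "set l \<noteq> {}" "0 < infdist (xs n) (convex hull (xs ` set l))" for l n
  proof -
    have "convex hull (xs ` set l) \<noteq> {}" using that(1) by simp
    from separation_margin[OF convex_convex_hull this that(2)]
    show ?thesis unfolding \<Theta>_def fst_conv snd_conv by (rule someI_ex)
  qed
  define E where "E \<omega> \<longleftrightarrow> \<omega> \<in> space M \<and> rel_compact_KB (range (\<lambda>n. B n \<omega>)) \<and>
      (\<forall>i. norm (\<Theta> i) = 1 \<longrightarrow> (\<lambda>n. support_fun (B n \<omega>) (\<Theta> i)) \<longlonglongrightarrow> \<phi> (\<Theta> i))" for \<omega>
  have "\<forall>i. AE \<omega> in M. norm (\<Theta> i) = 1 \<longrightarrow> (\<lambda>n. support_fun (B n \<omega>) (\<Theta> i)) \<longlonglongrightarrow> \<phi> (\<Theta> i)"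
  proof
    fix i show "AE \<omega> in M. norm (\<Theta> i) = 1 \<longrightarrow> (\<lambda>n. support_fun (B n \<omega>) (\<Theta> i)) \<longlonglongrightarrow> \<phi> (\<Theta> i)"
      by (cases "norm (\<Theta> i) = 1") (auto simp: conv)
  qed
  hence "AE \<omega> in M. \<forall>i. norm (\<Theta> i) = 1 \<longrightarrow> (\<lambda>n. support_fun (B n \<omega>) (\<Theta> i)) \<longlonglongrightarrow> \<phi> (\<Theta> i)"
    by (subst AE_all_countable)
  hence AEE: "AE \<omega> in M. E \<omega>" using relc AE_space by eventually_elim (auto simp: E_def)
  define LP where "LP K \<longleftrightarrow> K \<in> KB \<and> (\<exists>\<omega> r. E \<omega> \<and> strict_mono r \<and> (\<lambda>k. hausdorff_distance (B (r k) \<omega>) K) \<longlonglongrightarrow> 0)" for K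
  have LPconv: "convex K" if lpk: "LP K" for K
  proof -
    obtain \<omega> r where w: "E \<omega>" "strict_mono r" "(\<lambda>k. hausdorff_distance (B (r k) \<omega>) K) \<longlonglongrightarrow> 0" "K \<in> KB"
      using lpk unfolding LP_def by blast
    have sp: "\<omega> \<in> space M" using w(1) E_def by simp
    show ?thesis by (rule convex_limit[OF w(4) _ _ w(3)]) (use inKB[OF sp] cvx[OF sp] in auto)
  qed
  have LPsf: "support_fun K (\<Theta> i) = \<phi> (\<Theta> i)" if lpk: "LP K" "norm (\<Theta> i) = 1" for K i
  proof -
    obtain \<omega> r where w: "E \<omega>" "strict_mono r" "(\<lambda>k. hausdorff_distance (B (r k) \<omega>) K) \<longlonglongrightarrow> 0" "K \<in> KB"
      using lpk unfolding LP_def by blast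
    have sp: "\<omega> \<in> space M" using w(1) E_def by simp
    have l1: "(\<lambda>k. support_fun (B (r k) \<omega>) (\<Theta> i)) \<longlonglongrightarrow> support_fun K (\<Theta> i)"
      by (rule sf_tendsto[OF w(4) _ lpk(2) w(3)]) (use inKB[OF sp] in auto)
    have "(\<lambda>n. support_fun (B n \<omega>) (\<Theta> i)) \<longlonglongrightarrow> \<phi> (\<Theta> i)" using w(1) lpk(2) unfolding E_def by blast
    from LIMSEQ_subseq_LIMSEQ[OF this w(2)]
    have l2: "(\<lambda>k. support_fun (B (r k) \<omega>) (\<Theta> i)) \<longlonglongrightarrow> \<phi> (\<Theta> i)" by (simp add: o_def)
    show ?thesis using LIMSEQ_unique[OF l1 l2] .
  qed
  have LPeq: "K = K'" if "LP K" "LP K'" for K K'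
  proof -
    have KB: "K \<in> KB" "K' \<in> KB" using that unfolding LP_def by auto
    have eq: "support_fun K (\<Theta> i) = support_fun K' (\<Theta> i)" if "norm (\<Theta> i) = 1" for i
      using LPsf[OF \<open>LP K\<close> that] LPsf[OF \<open>LP K'\<close> that] by simp
    have "K' \<subseteq> K" by (rule ident[OF dense Th KB(1) LPconv[OF \<open>LP K\<close>] KB(2) eq])
    moreover have "K \<subseteq> K'" by (rule ident[OF dense Th KB(2) LPconv[OF \<open>LP K'\<close>] KB(1) eq[symmetric]])
    ultimately show ?thesis by auto
  qed
  obtain \<omega>0 where w0: "E \<omega>0" using AE_ex[OF assms(1) AEE] by blast
  have rc0: "rel_compact_KB (range (\<lambda>n. B n \<omega>0))" using w0 E_def by simp
  have "\<exists>r K. strict_mono r \<and> K \<in> KB \<and> (\<lambda>k. hausdorff_distance (B (r k) \<omega>0) K) \<longlonglongrightarrow> 0"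
    by (rule relc_sub[OF rc0]) simp
  then obtain r A where rA: "strict_mono r" "A \<in> KB" "(\<lambda>k. hausdorff_distance (B (r k) \<omega>0) A) \<longlonglongrightarrow> 0"
    by auto
  have LPA: "LP A" unfolding LP_def using rA w0 by blast
  have conv_all: "(\<lambda>n. hausdorff_distance (B n \<omega>) A) \<longlonglongrightarrow> 0" if Ew: "E \<omega>" for \<omega>
  proof (rule ccontr)
    assume nc: "\<not> (\<lambda>n. hausdorff_distance (B n \<omega>) A) \<longlonglongrightarrow> 0"
    have sp: "\<omega> \<in> space M" using Ew E_def by simp
    have "\<not> (\<forall>r>0. \<exists>no. \<forall>n\<ge>no. norm (hausdorff_distance (B n \<omega>) A - 0) < r)"
      using nc unfolding LIMSEQ_iff .
    then obtain e where e1: "e > 0" and e2: "\<not> (\<exists>no. \<forall>n\<ge>no. norm (hausdorff_distance (B n \<omega>) A - 0) < e)"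
      by blast
    have e: "e > 0" "\<forall>N. \<exists>n\<ge>N. \<not> norm (hausdorff_distance (B n \<omega>) A - 0) < e"
      using e1 e2 by blast+
    define S where "S = {n. e \<le> hausdorff_distance (B n \<omega>) A}"
    have "infinite S" unfolding infinite_nat_iff_unbounded_le S_def
    proof
      fix m obtain n where "n \<ge> m" "\<not> norm (hausdorff_distance (B n \<omega>) A - 0) < e" using e(2) by blast
      thus "\<exists>n\<ge>m. n \<in> {n. e \<le> hausdorff_distance (B n \<omega>) A}" using haus_nonneg[OF inKB[OF sp] rA(2), of n] by auto
    qed
    define s where "s = enumerate S"
    have s: "strict_mono s" "\<And>k. s k \<in> S"
      unfolding s_def by (rule strict_mono_enumerate[OF \<open>infinite S\<close>], rule enumerate_in_set[OF \<open>infinite S\<close>])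
    have rc1: "rel_compact_KB (range (\<lambda>n. B n \<omega>))" using Ew E_def by simp
    have "\<exists>r K. strict_mono r \<and> K \<in> KB \<and> (\<lambda>k. hausdorff_distance (B (s (r k)) \<omega>) K) \<longlonglongrightarrow> 0"
      by (rule relc_sub[OF rc1]) simp
    then obtain r' K where rK: "strict_mono r'" "K \<in> KB" "(\<lambda>k. hausdorff_distance (B (s (r' k)) \<omega>) K) \<longlonglongrightarrow> 0"
      by auto
    have "LP K" unfolding LP_def using rK Ew strict_mono_o[OF s(1) rK(1)]
      by (intro conjI exI[of _ \<omega>] exI[of _ "s \<circ> r'"]) (auto simp: o_def)
    hence "K = A" using LPeq LPA by blast
    with rK(3) have "\<exists>no. \<forall>k\<ge>no. norm (hausdorff_distance (B (s (r' k)) \<omega>) A - 0) < e"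
      unfolding LIMSEQ_iff using e(1) by blast
    then obtain k where "norm (hausdorff_distance (B (s (r' k)) \<omega>) A - 0) < e" by blast
    moreover have "s (r' k) \<in> S" by (rule s(2))
    ultimately show False unfolding S_def by auto
  qed
  have "\<forall>\<theta>. norm \<theta> = 1 \<longrightarrow> support_fun A \<theta> = \<phi> \<theta>"
  proof (intro allI impI)
    fix \<theta> :: "'a \<Rightarrow>\<^sub>L real" assume th: "norm \<theta> = 1"
    have "AE \<omega> in M. E \<omega> \<and> (\<lambda>n. support_fun (B n \<omega>) \<theta>) \<longlonglongrightarrow> \<phi> \<theta>"
      using AEE conv[OF th] by eventually_elim auto
    from AE_ex[OF assms(1) this]
    obtain \<omega> where w: "E \<omega>" "(\<lambda>n. support_fun (B n \<omega>) \<theta>) \<longlonglongrightarrow> \<phi> \<theta>"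
      by blast
    have sp: "\<omega> \<in> space M" using w(1) E_def by simp
    have "(\<lambda>n. support_fun (B n \<omega>) \<theta>) \<longlonglongrightarrow> support_fun A \<theta>"
      by (rule sf_tendsto[OF rA(2) _ th conv_all[OF w(1)]]) (use inKB[OF sp] in auto)
    thus "support_fun A \<theta> = \<phi> \<theta>" using LIMSEQ_unique w(2) by blast
  qed
  moreover have "AE \<omega> in M. (\<lambda>n. hausdorff_distance (B n \<omega>) A) \<longlonglongrightarrow> 0"
    using AEE by eventually_elim (rule conv_all)
  ultimately show ?thesis using rA(2) by blast
qed

end
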